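(* Let $(x_n)_{n\ge1}$ be a sequence of real numbers, $L\in\mathbb{R}$ and $\sigma\in\,]0,1]$. Then $i(x_n;L)\ge\sigma$ if and only if there exists a subsequence $(x_{k(n)})_{n\ge1}$ (with $k:\mathbb N\to\mathbb N$ strictly increasing) converging to $L$ such that \[ \delta_-\big(\{k(n)\mid n\in\mathbb N\}\big)\ge\sigma . \]
   Context: Let $\mathbb N=\{1,2,\dots\}$. For $K\subseteq\mathbb N$ the lower and upper densities are $\delta_-(K)=\liminf_{n\to\infty}\frac{|K\cap\{1,\dots,n\}|}{n}$ and $\delta_+(K)=\limsup_{n\to\infty}\frac{|K\cap\{1,\dots,n\}|}{n}$; when they coincide, their common value is the density $\delta(K)$. For a real sequence $(x_n)_{n\ge1}$ and $L\in\mathbb R$, the index of convergence of $(x_n)$ to $L$ is \[ i(x_n;L)=1-\sup_{\varepsilon>0}\delta_+\big(\{n\in\mathbb N\mid |x_n-L|\ge\varepsilon\}\big)=\inf_{\varepsilon>0}\delta_-\big(\{n\in\mathbb N\mid |x_n-L|<\varepsilon\}\big). \] *)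

theory Defs
  imports "HOL-Analysis.Analysis"
begin

definition count_ratio :: "nat set \<Rightarrow> nat \<Rightarrow> real" where
  "count_ratio K n = real (card (K \<inter> {1..n})) / real n"

definition lower_density :: "nat set \<Rightarrow> real" where
  "lower_density K = real_of_ereal (liminf (\<lambda>n. ereal (count_ratio K n)))"

definition upper_density :: "nat set \<Rightarrow> real" where
  "upper_density K = real_of_ereal (limsup (\<lambda>n. ereal (count_ratio K n)))"

definition conv_index :: "(nat \<Rightarrow> real) \<Rightarrow> real \<Rightarrow> real" where
  "conv_index x L = 1 - (SUP \<epsilon>\<in>{0<..}. upper_density {n. n \<ge> 1 \<and> \<bar>x n - L\<bar> \<ge> \<epsilon>})"

end

theory Submission
  imports Defs
begin

lemma cr_bounds: "0 \<le> count_ratio K n \<and> count_ratio K n \<le> 1"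
proof -
  have "card (K \<inter> {1..n}) \<le> card {1..n}" by (rule card_mono) auto
  then have "real (card (K \<inter> {1..n})) \<le> real n" by simp
  then show ?thesis unfolding count_ratio_def
    by (cases "n = 0") (auto simp: divide_le_eq_1)
qed

lemma ev_small: "(\<delta>::real) > 0 \<Longrightarrow> eventually (\<lambda>n. c / real n < \<delta>) sequentially"
  using order_tendstoD(2)[OF lim_const_over_n[of c]] by simp

lemma liminf_fin: "liminf (\<lambda>n. ereal (count_ratio K n)) = ereal (lower_density K)"
proof -
  have a: "ereal 0 \<le> liminf (\<lambda>n. ereal (count_ratio K n))"
    by (rule Liminf_bounded) (simp add: cr_bounds)
  have "limsup (\<lambda>n. ereal (count_ratio K n)) \<le> ereal 1"
    by (rule Limsup_bounded) (simp add: cr_bounds)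
  then have b: "liminf (\<lambda>n. ereal (count_ratio K n)) \<le> ereal 1"
    using Liminf_le_Limsup[OF trivial_limit_sequentially, of "\<lambda>n. ereal (count_ratio K n)"] by simp
  from a b show ?thesis unfolding lower_density_def
    by (cases "liminf (\<lambda>n. ereal (count_ratio K n))") auto
qed

lemma limsup_fin: "limsup (\<lambda>n. ereal (count_ratio K n)) = ereal (upper_density K)"
proof -
  have "ereal 0 \<le> liminf (\<lambda>n. ereal (count_ratio K n))"
    by (rule Liminf_bounded) (simp add: cr_bounds)
  then have a: "ereal 0 \<le> limsup (\<lambda>n. ereal (count_ratio K n))"
    using Liminf_le_Limsup[OF trivial_limit_sequentially, of "\<lambda>n. ereal (count_ratio K n)"] by simp
  have b: "limsup (\<lambda>n. ereal (count_ratio K n)) \<le> ereal 1"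
    by (rule Limsup_bounded) (simp add: cr_bounds)
  from a b show ?thesis unfolding upper_density_def
    by (cases "limsup (\<lambda>n. ereal (count_ratio K n))") auto
qed

lemma lower_ge_iff:
  "\<sigma> \<le> lower_density K \<longleftrightarrow> (\<forall>\<delta>>0. eventually (\<lambda>n. \<sigma> - \<delta> < count_ratio K n) sequentially)"
proof -
  have "\<sigma> \<le> lower_density K \<longleftrightarrow> ereal \<sigma> \<le> liminf (\<lambda>n. ereal (count_ratio K n))"
    by (simp add: liminf_fin)
  also have "\<dots> \<longleftrightarrow> (\<forall>y<ereal \<sigma>. eventually (\<lambda>n. y < ereal (count_ratio K n)) sequentially)"
    by (rule le_Liminf_iff)
  also have "\<dots> \<longleftrightarrow> (\<forall>\<delta>>0. eventually (\<lambda>n. \<sigma> - \<delta> < count_ratio K n) sequentially)"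
  proof
    assume H: "\<forall>y<ereal \<sigma>. eventually (\<lambda>n. y < ereal (count_ratio K n)) sequentially"
    show "\<forall>\<delta>>0. eventually (\<lambda>n. \<sigma> - \<delta> < count_ratio K n) sequentially"
    proof (intro allI impI)
      fix \<delta> :: real assume "\<delta> > 0"
      then have "ereal (\<sigma> - \<delta>) < ereal \<sigma>" by simp
      from H[rule_format, OF this] show "eventually (\<lambda>n. \<sigma> - \<delta> < count_ratio K n) sequentially"
        by (rule eventually_mono) simp
    qed
  next
    assume H: "\<forall>\<delta>>0. eventually (\<lambda>n. \<sigma> - \<delta> < count_ratio K n) sequentially"
    show "\<forall>y<ereal \<sigma>. eventually (\<lambda>n. y < ereal (count_ratio K n)) sequentially"
    proof (intro allI impI)
      fix y assume y: "y < ereal \<sigma>"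
      show "eventually (\<lambda>n. y < ereal (count_ratio K n)) sequentially"
      proof (cases y)
        case (real r)
        with y have "\<sigma> - r > 0" by simp
        from H[rule_format, OF this] show ?thesis
          by (rule eventually_mono) (simp add: real)
      qed (use y in auto)
    qed
  qed
  finally show ?thesis .
qed

lemma upper_le_iff:
  "upper_density K \<le> \<tau> \<longleftrightarrow> (\<forall>\<delta>>0. eventually (\<lambda>n. count_ratio K n < \<tau> + \<delta>) sequentially)"
proof -
  have "upper_density K \<le> \<tau> \<longleftrightarrow> limsup (\<lambda>n. ereal (count_ratio K n)) \<le> ereal \<tau>"
    by (simp add: limsup_fin)
  also have "\<dots> \<longleftrightarrow> (\<forall>y>ereal \<tau>. eventually (\<lambda>n. y > ereal (count_ratio K n)) sequentially)"
    by (rule Limsup_le_iff)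
  also have "\<dots> \<longleftrightarrow> (\<forall>\<delta>>0. eventually (\<lambda>n. count_ratio K n < \<tau> + \<delta>) sequentially)"
  proof
    assume H: "\<forall>y>ereal \<tau>. eventually (\<lambda>n. y > ereal (count_ratio K n)) sequentially"
    show "\<forall>\<delta>>0. eventually (\<lambda>n. count_ratio K n < \<tau> + \<delta>) sequentially"
    proof (intro allI impI)
      fix \<delta> :: real assume "\<delta> > 0"
      then have "ereal (\<tau> + \<delta>) > ereal \<tau>" by simp
      from H[rule_format, OF this] show "eventually (\<lambda>n. count_ratio K n < \<tau> + \<delta>) sequentially"
        by (rule eventually_mono) simp
    qed
  next
    assume H: "\<forall>\<delta>>0. eventually (\<lambda>n. count_ratio K n < \<tau> + \<delta>) sequentially"
    show "\<forall>y>ereal \<tau>. eventually (\<lambda>n. y > ereal (count_ratio K n)) sequentially"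
    proof (intro allI impI)
      fix y assume y: "y > ereal \<tau>"
      show "eventually (\<lambda>n. y > ereal (count_ratio K n)) sequentially"
      proof (cases y)
        case (real r)
        with y have "r - \<tau> > 0" by simp
        from H[rule_format, OF this] show ?thesis
          by (rule eventually_mono) (simp add: real)
      qed (use y in auto)
    qed
  qed
  finally show ?thesis .
qed

lemma compl_ratio:
  assumes "n \<ge> 1"
  shows "count_ratio {m. m \<ge> 1 \<and> P m} n = 1 - count_ratio {m. m \<ge> 1 \<and> \<not> P m} n"
proof -
  have u: "{m. m \<ge> 1 \<and> P m} \<inter> {1..n} \<union> {m. m \<ge> 1 \<and> \<not> P m} \<inter> {1..n} = {1..n}" by auto
  have "card ({m. m \<ge> 1 \<and> P m} \<inter> {1..n}) + card ({m. m \<ge> 1 \<and> \<not> P m} \<inter> {1..n}) = card {1..n}"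
    by (subst u[symmetric], rule card_Un_disjoint[symmetric]) auto
  then have "real (card ({m. m \<ge> 1 \<and> P m} \<inter> {1..n})) = real n - real (card ({m. m \<ge> 1 \<and> \<not> P m} \<inter> {1..n}))"
    by simp
  with assms show ?thesis unfolding count_ratio_def by (simp add: field_simps)
qed

lemma upper_lower_compl:
  "upper_density {m. m \<ge> 1 \<and> P m} \<le> 1 - \<sigma> \<longleftrightarrow> \<sigma> \<le> lower_density {m. m \<ge> 1 \<and> \<not> P m}"
proof -
  have "eventually (\<lambda>n. (count_ratio {m. m \<ge> 1 \<and> P m} n < 1 - \<sigma> + \<delta>) = (\<sigma> - \<delta> < count_ratio {m. m \<ge> 1 \<and> \<not> P m} n)) sequentially" for \<delta>
    using eventually_ge_at_top[of "1::nat"]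
  proof (rule eventually_mono)
    fix n :: nat assume "n \<ge> 1"
    from compl_ratio[OF this, of P] show "(count_ratio {m. m \<ge> 1 \<and> P m} n < 1 - \<sigma> + \<delta>) = (\<sigma> - \<delta> < count_ratio {m. m \<ge> 1 \<and> \<not> P m} n)"
      by linarith
  qed
  then have "eventually (\<lambda>n. count_ratio {m. m \<ge> 1 \<and> P m} n < 1 - \<sigma> + \<delta>) sequentially
     = eventually (\<lambda>n. \<sigma> - \<delta> < count_ratio {m. m \<ge> 1 \<and> \<not> P m} n) sequentially" for \<delta>
    by (rule eventually_subst)
  then show ?thesis by (simp add: upper_le_iff lower_ge_iff)
qed

lemma index_iff:
  "conv_index x L \<ge> \<sigma> \<longleftrightarrow> (\<forall>\<epsilon>>0. \<sigma> \<le> lower_density {n. n \<ge> 1 \<and> \<bar>x n - L\<bar> < \<epsilon>})"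
proof -
  have ub: "upper_density K \<le> 1" for K
    unfolding upper_le_iff using cr_bounds
    by (intro allI impI always_eventually) (smt (verit))
  have "conv_index x L \<ge> \<sigma> \<longleftrightarrow> (SUP \<epsilon>\<in>{0<..}. upper_density {n. n \<ge> 1 \<and> \<bar>x n - L\<bar> \<ge> \<epsilon>}) \<le> 1 - \<sigma>"
    unfolding conv_index_def by linarith
  also have "\<dots> \<longleftrightarrow> (\<forall>\<epsilon>\<in>{0<..}. upper_density {n. n \<ge> 1 \<and> \<bar>x n - L\<bar> \<ge> \<epsilon>} \<le> 1 - \<sigma>)"
    by (rule cSUP_le_iff) (auto intro: bdd_aboveI[where M=1] simp: ub)
  also have "\<dots> \<longleftrightarrow> (\<forall>\<epsilon>>0. \<sigma> \<le> lower_density {n. n \<ge> 1 \<and> \<bar>x n - L\<bar> < \<epsilon>})"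
    using upper_lower_compl[of "\<lambda>n. \<bar>x n - L\<bar> \<ge> _"] by (simp add: not_le Ball_def)
  finally show ?thesis .
qed

lemma ratio_le_add:
  assumes "card (A \<inter> {1..n}) \<le> card (B \<inter> {1..n}) + M" "n \<ge> 1"
  shows "count_ratio A n \<le> count_ratio B n + real M / real n"
proof -
  have "real (card (A \<inter> {1..n})) \<le> real (card (B \<inter> {1..n})) + real M" using assms(1) by linarith
  then have "real (card (A \<inter> {1..n})) / real n \<le> (real (card (B \<inter> {1..n})) + real M) / real n"
    by (rule divide_right_mono) simp
  then show ?thesis unfolding count_ratio_def by (simp add: add_divide_distrib)
qed

lemma dir_back:
  fixes x :: "nat \<Rightarrow> real"
  assumes k1: "\<forall>n\<ge>1. k n \<ge> 1" and lim: "(\<lambda>n. x (k n)) \<longlonglongrightarrow> L"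
    and dens: "\<sigma> \<le> lower_density (k ` {1..})" and e: "\<epsilon> > 0"
  shows "\<sigma> \<le> lower_density {n. n \<ge> 1 \<and> \<bar>x n - L\<bar> < \<epsilon>}"
proof -
  let ?B = "{n. n \<ge> 1 \<and> \<bar>x n - L\<bar> < \<epsilon>}"
  let ?K = "k ` {1..}"
  from lim e obtain M where M: "\<forall>n\<ge>M. \<bar>x (k n) - L\<bar> < \<epsilon>"
    unfolding LIMSEQ_iff by (auto simp: real_norm_def)
  have cardle: "card (?K \<inter> {1..n}) \<le> card (?B \<inter> {1..n}) + M" for n
  proof -
    have "?K \<inter> {1..n} \<subseteq> (?B \<inter> {1..n}) \<union> k ` {..<M}"
    proof
      fix y assume "y \<in> ?K \<inter> {1..n}"
      then obtain m where m: "m \<ge> 1" "y = k m" "y \<in> {1..n}" by auto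
      show "y \<in> (?B \<inter> {1..n}) \<union> k ` {..<M}"
      proof (cases "m < M")
        case False then show ?thesis using M m k1 by auto
      qed (use m in auto)
    qed
    then have "card (?K \<inter> {1..n}) \<le> card ((?B \<inter> {1..n}) \<union> k ` {..<M})"
      by (rule card_mono[rotated]) auto
    also have "\<dots> \<le> card (?B \<inter> {1..n}) + card (k ` {..<M})" by (rule card_Un_le)
    also have "card (k ` {..<M}) \<le> M" using card_image_le[of "{..<M}" k] by simp
    finally show ?thesis by simp
  qed
  show ?thesis unfolding lower_ge_iff
  proof (intro allI impI)
    fix \<delta> :: real assume d: "\<delta> > 0"
    have e1: "eventually (\<lambda>n. \<sigma> - \<delta>/2 < count_ratio ?K n) sequentially"
      using dens d unfolding lower_ge_iff by auto
    have e2: "eventually (\<lambda>n. real M / real n < \<delta>/2) sequentially" using d by (intro ev_small) simp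
    show "eventually (\<lambda>n. \<sigma> - \<delta> < count_ratio ?B n) sequentially"
      using e1 e2 eventually_ge_at_top[of "1::nat"]
    proof (eventually_elim)
      case (elim n)
      with ratio_le_add[OF cardle elim(3)] show ?case by linarith
    qed
  qed
qed

primrec mkN :: "(nat \<Rightarrow> nat) \<Rightarrow> nat \<Rightarrow> nat" where
  "mkN g 0 = max (g 0) 1"
| "mkN g (Suc j) = max (g (Suc j)) (Suc (mkN g j))"

lemma mkN_props: "strict_mono (mkN g)" "mkN g j \<ge> g j" "mkN g 0 \<ge> 1"
proof -
  show "strict_mono (mkN g)" by (rule strict_monoI_Suc) simp
  show "mkN g j \<ge> g j" by (cases j) auto
  show "mkN g 0 \<ge> 1" by simp
qed

lemma dir_fwd:
  fixes x :: "nat \<Rightarrow> real"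
  assumes s0: "0 < \<sigma>"
    and H: "\<forall>\<epsilon>>0. \<sigma> \<le> lower_density {n. n \<ge> 1 \<and> \<bar>x n - L\<bar> < \<epsilon>}"
  shows "\<exists>k :: nat \<Rightarrow> nat. strict_mono_on {1..} k \<and> (\<forall>n\<ge>1. k n \<ge> 1) \<and>
       (\<lambda>n. x (k n)) \<longlonglongrightarrow> L \<and> lower_density (k ` {1..}) \<ge> \<sigma>"
proof -
  define Bj where "Bj j = {n. n \<ge> 1 \<and> \<bar>x n - L\<bar> < 1 / real (Suc j)}" for j
  have Bmono: "Bj j \<subseteq> Bj i" if "i \<le> j" for i j
  proof -
    have "1 / real (Suc j) \<le> 1 / real (Suc i)" using that by (simp add: frac_le)
    then show ?thesis unfolding Bj_def by auto
  qed
  have "\<forall>j. \<exists>N. \<forall>n\<ge>N. \<sigma> - 1 / real (Suc j) < count_ratio (Bj j) n"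
  proof
    fix j
    have "\<sigma> \<le> lower_density (Bj j)" unfolding Bj_def using H by simp
    then have "eventually (\<lambda>n. \<sigma> - 1 / real (Suc j) < count_ratio (Bj j) n) sequentially"
      unfolding lower_ge_iff by simp
    then show "\<exists>N. \<forall>n\<ge>N. \<sigma> - 1 / real (Suc j) < count_ratio (Bj j) n"
      unfolding eventually_sequentially .
  qed
  then obtain g where g: "\<And>j n. n \<ge> g j \<Longrightarrow> \<sigma> - 1 / real (Suc j) < count_ratio (Bj j) n"
    by metis
  define N where "N = mkN g"
  have Nsm: "strict_mono N" and Ng: "\<And>j. N j \<ge> g j" and N01: "N 0 \<ge> 1"
    using mkN_props unfolding N_def by auto
  have Ninc: "j \<le> N j" for j using strict_mono_imp_increasing[OF Nsm] .
  define K where "K = {m. N 0 \<le> m \<and> (\<forall>j. N j \<le> m \<longrightarrow> m \<in> Bj j)}"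
  have K1: "m \<in> K \<Longrightarrow> m \<ge> 1" for m using N01 unfolding K_def by auto
  have Kclose: "m \<in> K \<Longrightarrow> N j \<le> m \<Longrightarrow> \<bar>x m - L\<bar> < 1 / real (Suc j)" for m j
    unfolding K_def Bj_def by auto
  have Kratio: "\<sigma> - 1 / real (Suc j0) - real (N 0) / real n < count_ratio K n"
    if n: "N j0 \<le> n" for j0 n
  proof -
    define J where "J = Max {i. N i \<le> n}"
    have fin: "finite {i. N i \<le> n}"
      by (rule finite_subset[of _ "{..n}"]) (auto intro: order_trans[OF Ninc])
    have J0: "j0 \<le> J" unfolding J_def using fin n by (intro Max_ge) auto
    have NJ: "N J \<le> n" unfolding J_def using fin n Max_in[OF fin] by auto
    have Jmax: "N i \<le> n \<Longrightarrow> i \<le> J" for i unfolding J_def using fin by (intro Max_ge) auto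
    have n1: "n \<ge> 1" using n N01 strict_mono_less_eq[OF Nsm, of 0 j0] by simp
    have sub: "Bj J \<inter> {1..n} \<subseteq> (K \<inter> {1..n}) \<union> {1..<N 0}"
    proof
      fix m assume m: "m \<in> Bj J \<inter> {1..n}"
      show "m \<in> (K \<inter> {1..n}) \<union> {1..<N 0}"
      proof (cases "m < N 0")
        case True then show ?thesis using m unfolding Bj_def by auto
      next
        case False
        have "m \<in> Bj i" if "N i \<le> m" for i
        proof -
          have "i \<le> J" using Jmax that m by auto
          then show ?thesis using Bmono m by blast
        qed
        then show ?thesis using False m unfolding K_def by auto
      qed
    qed
    have "card (Bj J \<inter> {1..n}) \<le> card ((K \<inter> {1..n}) \<union> {1..<N 0})"
      by (rule card_mono[OF _ sub]) auto
    also have "\<dots> \<le> card (K \<inter> {1..n}) + card {1..<N 0}" by (rule card_Un_le)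
    also have "card {1..<N 0} \<le> N 0" by simp
    finally have "count_ratio (Bj J) n \<le> count_ratio K n + real (N 0) / real n"
      using ratio_le_add[OF _ n1] by simp
    moreover have "\<sigma> - 1 / real (Suc J) < count_ratio (Bj J) n" using g Ng NJ order_trans by blast
    moreover have "1 / real (Suc J) \<le> 1 / real (Suc j0)" using J0 by (simp add: frac_le)
    ultimately show ?thesis by linarith
  qed
  have dens: "\<sigma> \<le> lower_density K" unfolding lower_ge_iff
  proof (intro allI impI)
    fix \<delta> :: real assume d: "\<delta> > 0"
    obtain j0 where j0: "1 / real (Suc j0) < \<delta>/2"
      using reals_Archimedean[of "\<delta>/2"] d by (auto simp: field_simps)
    have e2: "eventually (\<lambda>n. real (N 0) / real n < \<delta>/2) sequentially" using d by (intro ev_small) simp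
    show "eventually (\<lambda>n. \<sigma> - \<delta> < count_ratio K n) sequentially"
      using e2 eventually_ge_at_top[of "N j0"]
    proof (eventually_elim)
      case (elim n)
      with Kratio[OF elim(2)] j0 show ?case by linarith
    qed
  qed
  have Kinf: "infinite K"
  proof
    assume fK: "finite K"
    have "\<sigma>/2 > 0" using s0 by simp
    then have "eventually (\<lambda>n. \<sigma> - \<sigma>/2 < count_ratio K n) sequentially"
      using dens unfolding lower_ge_iff by blast
    moreover have "eventually (\<lambda>n. real (card K) / real n < \<sigma>/2) sequentially"
      using s0 by (intro ev_small) simp
    ultimately have "eventually (\<lambda>n. False) sequentially"
    proof (eventually_elim)
      case (elim n)
      have "card (K \<inter> {1..n}) \<le> card K" using fK by (intro card_mono) auto
      then have "count_ratio K n \<le> real (card K) / real n" unfolding count_ratio_def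
        by (intro divide_right_mono) auto
      with elim show ?case by linarith
    qed
    then show False by simp
  qed
  define k where "k n = enumerate K (n - 1)" for n
  have "strict_mono_on {1..} k"
    unfolding k_def by (rule strict_mono_onI) (use Kinf in auto)
  moreover have "\<forall>n\<ge>1. k n \<ge> 1" unfolding k_def using K1 enumerate_in_set[OF Kinf] by auto
  moreover have "k ` {1..} = K"
  proof
    show "k ` {1..} \<subseteq> K" unfolding k_def using enumerate_in_set[OF Kinf] by auto
    show "K \<subseteq> k ` {1..}"
    proof
      fix s assume "s \<in> K"
      then obtain i where "enumerate K i = s" using enumerate_Ex[OF Kinf] by blast
      then have "k (Suc i) = s" unfolding k_def by simp
      then show "s \<in> k ` {1..}" by force
    qed
  qed
  moreover have "(\<lambda>n. x (k n)) \<longlonglongrightarrow> L"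
    unfolding LIMSEQ_iff real_norm_def
  proof (intro allI impI)
    fix r :: real assume r: "r > 0"
    obtain j where j: "1 / real (Suc j) < r"
      using reals_Archimedean[of r] r by (auto simp: field_simps)
    show "\<exists>no. \<forall>n\<ge>no. \<bar>x (k n) - L\<bar> < r"
    proof (intro exI allI impI)
      fix n assume n: "n \<ge> Suc (N j)"
      have "n - 1 \<le> k n" unfolding k_def by (rule le_enumerate[OF Kinf])
      then have "N j \<le> k n" using n by simp
      moreover have "k n \<in> K" unfolding k_def by (rule enumerate_in_set[OF Kinf])
      ultimately show "\<bar>x (k n) - L\<bar> < r" using Kclose j by fastforce
    qed
  qed
  ultimately show ?thesis using dens by metis
qed

theorem mainTheorem1:
  fixes x :: "nat \<Rightarrow> real" and L :: real and \<sigma> :: real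
  assumes "0 < \<sigma>" and "\<sigma> \<le> 1"
  shows "conv_index x L \<ge> \<sigma> \<longleftrightarrow>
    (\<exists>k :: nat \<Rightarrow> nat. strict_mono_on {1..} k \<and> (\<forall>n\<ge>1. k n \<ge> 1) \<and>
       (\<lambda>n. x (k n)) \<longlonglongrightarrow> L \<and>
       lower_density (k ` {1..}) \<ge> \<sigma>)"
  unfolding index_iff using dir_fwd[OF assms(1)] dir_back by blast

end
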